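(* Let $\mathfrak H$ be a Hilbert space, $A$ a nonnegative self-adjoint operator in $\mathfrak H$, and let $y\in S_0$ with $\sigma(y)=\alpha$. Then for all $h>0$ and all $k,n\in\mathbb N_0$, $$\|\Delta_h^k y^{(n)}\|_S\le(\alpha h)^k\alpha^n\|y\|_S.$$
   Context: $e^{-At}=\int_0^\infty e^{-\lambda t}dE(\lambda)$, $E$ the spectral measure of $A$. A weak solution of $y'+Ay=0$ on $\mathbb R_+=[0,\infty)$ is a continuous $y:\mathbb R_+\to\mathfrak H$ with $\int_0^ty(s)ds\in\mathcal D(A)$ and $y(t)=-A\int_0^ty(s)ds+y(0)$ for all $t\ge0$. $S$ is the set of weak solutions (each of the form $e^{-At}f$ for a unique $f\in\mathfrak H$), normed by $\|y\|_S=\sup_{t\ge0}\|y(t)\|$. $S_0\subset S$ is the set of weak solutions extending to entire $\mathfrak H$-valued functions $y(z)$ of exponential type, with type $\sigma(y)=\inf\{\beta>0:\exists c,\ \|y(z)\|\le ce^{\beta|z|}\ \forall z\in\mathbb C\}$. For $h>0$, $k\in\mathbb N_0$, $\Delta_h^k=(e^{-Ah}-I)^k=\sum_{j=0}^k(-1)^{k-j}\binom kj e^{-Ajh}$, applied pointwise: $(\Delta_h^kx)(t)=\Delta_h^k x(t)$. *)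

theory Defs
  imports "HOL-Analysis.Analysis"
begin

text \<open>A complex Hilbert space is modelled as a real Hilbert space (real part of the
complex inner product) together with the operator of multiplication by the imaginary
unit, which is a real-linear isometry squaring to minus the identity.\<close>

class complex_hilbert = real_inner + complete_space +
  fixes imult :: "'a \<Rightarrow> 'a"
  assumes imult_add: "imult (x + y) = imult x + imult y"
    and imult_scaleR: "imult (r *\<^sub>R x) = r *\<^sub>R imult x"
    and imult_imult: "imult (imult x) = - x"
    and imult_inner: "inner (imult x) (imult y) = inner x y"

definition scaleC :: "complex \<Rightarrow> 'a::complex_hilbert \<Rightarrow> 'a" where
  "scaleC c x = Re c *\<^sub>R x + Im c *\<^sub>R imult x"

text \<open>A (possibly unbounded) operator is given by its domain D and a function A
(only its values on D matter).\<close>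

definition nonneg_selfadjoint :: "'a::complex_hilbert set \<Rightarrow> ('a \<Rightarrow> 'a) \<Rightarrow> bool" where
  "nonneg_selfadjoint D A \<longleftrightarrow>
     subspace D \<and> closure D = UNIV \<and>
     (\<forall>x\<in>D. \<forall>y\<in>D. A (x + y) = A x + A y) \<and>
     (\<forall>x\<in>D. \<forall>r. A (r *\<^sub>R x) = r *\<^sub>R A x) \<and>
     (\<forall>x\<in>D. imult x \<in> D \<and> A (imult x) = imult (A x)) \<and>
     {y. \<exists>z. \<forall>x\<in>D. inner (A x) y = inner x z} = D \<and>
     (\<forall>x\<in>D. \<forall>y\<in>D. inner (A x) y = inner x (A y)) \<and>
     (\<forall>x\<in>D. inner (A x) x \<ge> 0)"

definition weak_solution :: "'a::complex_hilbert set \<Rightarrow> ('a \<Rightarrow> 'a) \<Rightarrow> (real \<Rightarrow> 'a) \<Rightarrow> bool" where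
  "weak_solution D A y \<longleftrightarrow>
     continuous_on {0..} y \<and>
     (\<forall>t\<ge>0. integral {0..t} y \<in> D \<and> y t = - A (integral {0..t} y) + y 0)"

text \<open>The semigroup: e^{-As} f is the value at s of the weak solution with initial value f.\<close>

definition semigroup :: "'a::complex_hilbert set \<Rightarrow> ('a \<Rightarrow> 'a) \<Rightarrow> real \<Rightarrow> 'a \<Rightarrow> 'a" where
  "semigroup D A s f = (THE v. \<exists>x. weak_solution D A x \<and> x 0 = f \<and> x s = v)"

definition S_norm :: "(real \<Rightarrow> 'a::real_normed_vector) \<Rightarrow> real" where
  "S_norm x = (SUP t\<in>{0..}. norm (x t))"

definition entire :: "(complex \<Rightarrow> 'a::complex_hilbert) \<Rightarrow> bool" where
  "entire Y \<longleftrightarrow> (\<forall>z. \<exists>v. ((\<lambda>w. scaleC (inverse (w - z)) (Y w - Y z)) \<longlongrightarrow> v) (at z))"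

definition exp_type_set :: "(complex \<Rightarrow> 'a::real_normed_vector) \<Rightarrow> real set" where
  "exp_type_set Y = {\<beta>. \<beta> > 0 \<and> (\<exists>c. \<forall>z. norm (Y z) \<le> c * exp (\<beta> * cmod z))}"

definition exp_type :: "(complex \<Rightarrow> 'a::real_normed_vector) \<Rightarrow> real" where
  "exp_type Y = Inf (exp_type_set Y)"

definition entire_ext_exp_type :: "(complex \<Rightarrow> 'a::complex_hilbert) \<Rightarrow> (real \<Rightarrow> 'a) \<Rightarrow> bool" where
  "entire_ext_exp_type Y y \<longleftrightarrow> entire Y \<and> (\<forall>t\<ge>0. Y (complex_of_real t) = y t) \<and> exp_type_set Y \<noteq> {}"

definition S0 :: "'a::complex_hilbert set \<Rightarrow> ('a \<Rightarrow> 'a) \<Rightarrow> (real \<Rightarrow> 'a) set" where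
  "S0 D A = {y. weak_solution D A y \<and> (\<exists>Y. entire_ext_exp_type Y y)}"

fun nth_deriv :: "(real \<Rightarrow> 'a::real_normed_vector) \<Rightarrow> nat \<Rightarrow> real \<Rightarrow> 'a" where
  "nth_deriv y 0 = y"
| "nth_deriv y (Suc n) = (\<lambda>t. vector_derivative (nth_deriv y n) (at t within {0..}))"

definition Delta :: "'a::complex_hilbert set \<Rightarrow> ('a \<Rightarrow> 'a) \<Rightarrow> real \<Rightarrow> nat \<Rightarrow> (real \<Rightarrow> 'a) \<Rightarrow> real \<Rightarrow> 'a" where
  "Delta D A h k x = (\<lambda>t. \<Sum>j\<le>k. ((-1) ^ (k - j) * real (k choose j)) *\<^sub>R semigroup D A (real j * h) (x t))"

end

theory Submission
  imports Defs "HOL-Complex_Analysis.Complex_Analysis"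
begin

lemma vder_iff_dq:
  fixes f :: "real \<Rightarrow> 'a::real_normed_vector"
  shows "(f has_vector_derivative v) (at x within S) \<longleftrightarrow>
         ((\<lambda>y. inverse (y - x) *\<^sub>R (f y - f x)) \<longlongrightarrow> v) (at x within S)"
proof -
  have bl: "bounded_linear (\<lambda>h. h *\<^sub>R v)" by (rule bounded_linear_scaleR_left)
  have eq: "\<forall>\<^sub>F y in at x within S. norm ((f y - f x) - (y - x) *\<^sub>R v) / norm (y - x)
            = norm (inverse (y - x) *\<^sub>R (f y - f x) - v)"
  proof (rule eventually_at_filter[THEN iffD2], rule always_eventually, intro allI impI)
    fix y assume "y \<noteq> x"
    then have nz: "y - x \<noteq> 0" by simp
    have "inverse (y - x) *\<^sub>R ((f y - f x) - (y - x) *\<^sub>R v) = inverse (y - x) *\<^sub>R (f y - f x) - (inverse (y - x) * (y - x)) *\<^sub>R v"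
      by (simp add: scaleR_diff_right)
    then have "inverse (y - x) *\<^sub>R (f y - f x) - v = inverse (y - x) *\<^sub>R ((f y - f x) - (y - x) *\<^sub>R v)"
      using nz by simp
    then show "norm ((f y - f x) - (y - x) *\<^sub>R v) / norm (y - x)
            = norm (inverse (y - x) *\<^sub>R (f y - f x) - v)"
      by (simp add: divide_inverse abs_inverse mult.commute)
  qed
  have "(f has_vector_derivative v) (at x within S) \<longleftrightarrow>
        ((\<lambda>y. norm ((f y - f x) - (y - x) *\<^sub>R v) / norm (y - x)) \<longlongrightarrow> 0) (at x within S)"
    unfolding has_vector_derivative_def has_derivative_iff_norm using bl by simp
  also have "\<dots> \<longleftrightarrow> ((\<lambda>y. norm (inverse (y - x) *\<^sub>R (f y - f x) - v)) \<longlongrightarrow> 0) (at x within S)"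
    by (rule tendsto_cong[OF eq])
  also have "\<dots> \<longleftrightarrow> ((\<lambda>y. inverse (y - x) *\<^sub>R (f y - f x)) \<longlongrightarrow> v) (at x within S)"
    by (simp add: tendsto_norm_zero_iff LIM_zero_iff)
  finally show ?thesis .
qed

instance complex_hilbert \<subseteq> banach ..

lemma imult_zero[simp]: "imult (0::'a::complex_hilbert) = 0"
  by (metis imult_scaleR scale_zero_left)
lemma imult_minus: "imult (- x) = - imult (x::'a::complex_hilbert)"
  by (metis imult_scaleR scaleR_minus1_left)
lemma imult_diff: "imult (x - y) = imult x - imult (y::'a::complex_hilbert)"
  using imult_add[of x "-y"] imult_minus[of y] by simp
lemma inner_imult_left: "inner (imult x) v = - inner x (imult (v::'a::complex_hilbert))"
proof -
  have "inner (imult x) (imult (imult v)) = inner x (imult v)" by (rule imult_inner)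
  then show ?thesis by (simp add: imult_imult)
qed
lemma inner_imult_self: "inner x (imult (x::'a::complex_hilbert)) = 0"
  using inner_imult_left[of x x] by (simp add: inner_commute)

definition cinner :: "'a::complex_hilbert \<Rightarrow> 'a \<Rightarrow> complex" where
  "cinner x v = Complex (inner x v) (inner x (imult v))"

lemma cinner_add_left: "cinner (x + y) v = cinner x v + cinner y v"
  by (simp add: cinner_def inner_add_left complex_eq_iff)
lemma cinner_diff_left: "cinner (x - y) v = cinner x v - cinner y v"
  by (simp add: cinner_def inner_diff_left complex_eq_iff)
lemma cinner_scaleR_left: "cinner (r *\<^sub>R x) v = of_real r * cinner x v"
  by (simp add: cinner_def complex_eq_iff)
lemma cinner_zero_left[simp]: "cinner 0 v = 0"
  by (simp add: cinner_def complex_eq_iff)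
lemma cinner_scaleC: "cinner (scaleC a x) v = a * cinner x v"
  by (simp add: cinner_def scaleC_def complex_eq_iff inner_add_left inner_imult_left imult_inner
      imult_imult algebra_simps)
lemma cinner_self: "cinner x x = of_real (norm x ^ 2)"
  by (simp add: cinner_def complex_eq_iff inner_imult_self power2_norm_eq_inner)
lemma scaleC_of_real: "scaleC (of_real r) x = r *\<^sub>R x"
  by (simp add: scaleC_def)

lemma norm_cinner: "cmod (cinner x v) \<le> norm x * norm v"
proof -
  define X where "X = inner x v"
  define Y where "Y = inner x (imult v)"
  define w where "w = X *\<^sub>R v + Y *\<^sub>R imult v"
  have iw: "inner x w = X^2 + Y^2" by (simp add: w_def inner_add_right X_def Y_def power2_eq_square)
  have "inner w w = X*X * inner v v + Y*Y * inner (imult v) (imult v) + 2*X*Y*inner v (imult v)"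
    by (simp add: w_def inner_add_left inner_add_right inner_commute[of "imult v" v] algebra_simps)
  also have "\<dots> = (X^2 + Y^2) * inner v v"
    by (simp add: imult_inner inner_imult_self power2_eq_square algebra_simps)
  finally have ww: "inner w w = (X^2 + Y^2) * inner v v" .
  have nw: "norm w = sqrt (X^2+Y^2) * norm v"
    unfolding norm_eq_sqrt_inner ww by (simp add: real_sqrt_mult)
  have "X^2 + Y^2 \<le> norm x * norm w" using Cauchy_Schwarz_ineq2[of x w] iw by simp
  also have "\<dots> = norm x * norm v * sqrt (X^2+Y^2)" by (simp add: nw)
  finally have "X^2 + Y^2 \<le> norm x * norm v * sqrt (X^2+Y^2)" .
  have e: "sqrt (X^2+Y^2) * sqrt (X^2+Y^2) = X^2+Y^2"
    using real_sqrt_mult_self[of "X^2+Y^2"] by simp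
  have "sqrt (X^2+Y^2) \<le> norm x * norm v"
  proof (cases "sqrt (X^2+Y^2) = 0")
    case True then show ?thesis by simp
  next
    case False
    moreover have "sqrt (X^2+Y^2) \<ge> 0" by simp
    ultimately have "sqrt (X^2+Y^2) > 0" by linarith
    moreover have "sqrt (X^2+Y^2) * sqrt (X^2+Y^2) \<le> (norm x * norm v) * sqrt (X^2+Y^2)"
      using \<open>X^2 + Y^2 \<le> norm x * norm v * sqrt (X^2+Y^2)\<close> e by simp
    ultimately show ?thesis using mult_right_le_imp_le by blast
  qed
  then show ?thesis by (simp add: cinner_def cmod_def X_def Y_def)
qed

lemma tendsto_cinner: "(f \<longlongrightarrow> a) F \<Longrightarrow> ((\<lambda>x. cinner (f x) v) \<longlongrightarrow> cinner a v) F"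
  unfolding cinner_def by (intro tendsto_Complex tendsto_intros)

lemma norm_from_cinner_bound:
  assumes "cmod (cinner x x) \<le> K * norm x" "0 \<le> K" shows "norm x \<le> K"
proof (cases "x = 0")
  case True then show ?thesis using assms by simp
next
  case False
  have "norm x * norm x \<le> K * norm x" using assms by (simp add: cinner_self power2_eq_square norm_mult)
  then show ?thesis using False by simp
qed

definition cder :: "(complex \<Rightarrow> 'a::complex_hilbert) \<Rightarrow> complex \<Rightarrow> 'a" where
  "cder F z = Lim (at z) (\<lambda>w. scaleC (inverse (w - z)) (F w - F z))"

definition expb :: "(complex \<Rightarrow> 'a::real_normed_vector) \<Rightarrow> real \<Rightarrow> real \<Rightarrow> bool" where
  "expb F c \<beta> \<longleftrightarrow> (\<forall>z. norm (F z) \<le> c * exp (\<beta> * cmod z))"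

lemma cder_tendsto:
  assumes "entire F"
  shows "((\<lambda>w. scaleC (inverse (w - z)) (F w - F z)) \<longlongrightarrow> cder F z) (at z)"
proof -
  from assms obtain v where v: "((\<lambda>w. scaleC (inverse (w - z)) (F w - F z)) \<longlongrightarrow> v) (at z)"
    unfolding entire_def by blast
  have "Lim (at z) (\<lambda>w. scaleC (inverse (w - z)) (F w - F z)) = v"
    by (rule tendsto_Lim[OF _ v]) simp
  then show ?thesis using v unfolding cder_def by simp
qed

lemma scal_deriv:
  assumes "entire F"
  shows "((\<lambda>z. cinner (F z) v) has_field_derivative cinner (cder F z) v) (at z)"
proof -
  have eq: "(\<lambda>y. (cinner (F y) v - cinner (F z) v) / (y - z)) =
            (\<lambda>y. cinner (scaleC (inverse (y - z)) (F y - F z)) v)"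
    by (rule ext) (simp add: cinner_scaleC cinner_diff_left divide_inverse mult.commute)
  show ?thesis unfolding has_field_derivative_iff eq
    by (rule tendsto_cinner[OF cder_tendsto[OF assms]])
qed

lemma scal_holo:
  assumes "entire F" shows "(\<lambda>z. cinner (F z) v) holomorphic_on S"
  unfolding holomorphic_on_def field_differentiable_def
  using scal_deriv[OF assms] has_field_derivative_at_within by blast

lemma scal_deriv_eq:
  assumes "entire F" shows "deriv (\<lambda>z. cinner (F z) v) = (\<lambda>z. cinner (cder F z) v)"
  by (rule ext) (rule DERIV_imp_deriv[OF scal_deriv[OF assms]])

lemma expb_c_nonneg: "expb F c \<beta> \<Longrightarrow> 0 \<le> c"
  unfolding expb_def
proof -
  assume "\<forall>z. norm (F z) \<le> c * exp (\<beta> * cmod z)"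
  then have "norm (F 0) \<le> c * exp (\<beta> * cmod 0)" by blast
  then have "norm (F 0) \<le> c" by simp
  then show "0 \<le> c" using norm_ge_zero[of "F 0"] by linarith
qed

lemma scal_bound:
  assumes "expb F c \<beta>" "0 \<le> \<beta>" "cmod w \<le> R"
  shows "cmod (cinner (F w) v) \<le> c * exp (\<beta> * R) * norm v"
proof -
  have "cmod (cinner (F w) v) \<le> norm (F w) * norm v" by (rule norm_cinner)
  also have "\<dots> \<le> c * exp (\<beta> * cmod w) * norm v"
    using assms(1) unfolding expb_def by (simp add: mult_right_mono)
  also have "\<dots> \<le> c * exp (\<beta> * R) * norm v"
    using expb_c_nonneg[OF assms(1)] assms(2,3)
    by (intro mult_right_mono mult_left_mono) (auto intro: mult_left_mono)
  finally show ?thesis .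
qed

lemma cmod_le_add: "cmod (x - z) \<le> r \<Longrightarrow> cmod x \<le> cmod z + r"
  by (metis add.commute diff_add_cancel norm_triangle_ineq order_trans add_left_mono)

lemma higher_scal:
  assumes "entire F"
  shows "(deriv ^^ n) (\<lambda>z. cinner (F z) v) holomorphic_on UNIV"
  by (rule holomorphic_higher_deriv[OF scal_holo[OF assms]]) simp

lemma higher_has_deriv:
  assumes "entire F"
  shows "((deriv ^^ n) (\<lambda>z. cinner (F z) v) has_field_derivative (deriv ^^ Suc n) (\<lambda>z. cinner (F z) v) u) (at u)"
proof -
  have "(deriv ^^ n) (\<lambda>z. cinner (F z) v) field_differentiable at u"
    using higher_scal[OF assms, of n v] holomorphic_on_imp_differentiable_at by blast
  then show ?thesis using DERIV_deriv_iff_field_differentiable by fastforce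
qed

lemma cauchy_scal:
  assumes "entire F" "expb F c \<beta>" "0 \<le> \<beta>" "0 < r"
  shows "cmod ((deriv ^^ n) (\<lambda>z. cinner (F z) v) u) \<le> fact n * (c * exp (\<beta> * (cmod u + r)) * norm v) / r ^ n"
proof (rule Cauchy_inequality)
  show "(\<lambda>z. cinner (F z) v) holomorphic_on ball u r" by (rule scal_holo[OF assms(1)])
  show "continuous_on (cball u r) (\<lambda>z. cinner (F z) v)"
    by (rule holomorphic_on_imp_continuous_on, rule scal_holo[OF assms(1)])
  show "0 < r" by fact
  fix x assume "cmod (u - x) = r"
  then have "cmod x \<le> cmod u + r" using cmod_le_add[of x u r] by (simp add: norm_minus_commute)
  then show "cmod (cinner (F x) v) \<le> c * exp (\<beta> * (cmod u + r)) * norm v"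
    by (rule scal_bound[OF assms(2,3)])
qed

lemma cder_bound:
  assumes "entire F" "expb F c \<beta>" "0 \<le> \<beta>"
  shows "expb (cder F) (c * exp \<beta>) \<beta>"
  unfolding expb_def
proof
  fix z
  define v where "v = cder F z"
  have "cmod ((deriv ^^ 1) (\<lambda>z. cinner (F z) v) z) \<le> fact 1 * (c * exp (\<beta> * (cmod z + 1)) * norm v) / 1 ^ 1"
    by (rule cauchy_scal[OF assms]) simp
  then have "cmod (cinner v v) \<le> c * exp (\<beta> * (cmod z + 1)) * norm v"
    by (simp add: scal_deriv_eq[OF assms(1)] v_def)
  then have "norm v \<le> c * exp (\<beta> * (cmod z + 1))"
    by (rule norm_from_cinner_bound) (use expb_c_nonneg[OF assms(2)] in simp)
  then show "norm (cder F z) \<le> c * exp \<beta> * exp (\<beta> * cmod z)"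
    by (simp add: v_def distrib_left exp_add mult.assoc mult.commute)
qed

lemma complete_limit:
  fixes q :: "complex \<Rightarrow> 'a::{real_normed_vector,complete_space}"
  assumes K: "0 \<le> K"
    and H: "\<And>w w'. 0 < cmod (w - z) \<Longrightarrow> cmod (w - z) \<le> 1 \<Longrightarrow> 0 < cmod (w' - z) \<Longrightarrow> cmod (w' - z) \<le> 1
            \<Longrightarrow> norm (q w - q w') \<le> K * (cmod (w - z) + cmod (w' - z))"
  shows "\<exists>L. (q \<longlongrightarrow> L) (at z)"
proof -
  define s where "s n = q (z + of_real (1 / real (Suc n)))" for n
  have d: "cmod ((z + of_real (1 / real (Suc n))) - z) = 1 / real (Suc n)" for n
    by (simp only: add_diff_cancel_left' norm_of_real) simp
  have sb: "norm (s m - s n) \<le> K * (1 / real (Suc m) + 1 / real (Suc n))" for m n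
  proof -
    have "norm (s m - s n) \<le> K * (cmod ((z + of_real (1 / real (Suc m))) - z) + cmod ((z + of_real (1 / real (Suc n))) - z))"
      unfolding s_def by (rule H) (simp_all only: d, simp_all)
    then show ?thesis by (simp only: d)
  qed
  have "Cauchy s"
  proof (rule metric_CauchyI)
    fix e :: real assume "0 < e"
    obtain M :: nat where M: "2 * K / e < real M" using reals_Archimedean2 by blast
    have "2 * K < e * real (Suc M)" using M \<open>0 < e\<close> by (simp add: field_simps)
    show "\<exists>M. \<forall>m\<ge>M. \<forall>n\<ge>M. dist (s m) (s n) < e"
    proof (intro exI allI impI)
      fix m n assume "M \<le> m" "M \<le> n"
      have "1 / real (Suc m) \<le> 1 / real (Suc M)" "1 / real (Suc n) \<le> 1 / real (Suc M)"
        using \<open>M \<le> m\<close> \<open>M \<le> n\<close> by (auto simp: divide_simps)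
      then have "K * (1 / real (Suc m) + 1 / real (Suc n)) \<le> K * (2 / real (Suc M))"
        using K by (intro mult_left_mono) auto
      also have "\<dots> < e" using \<open>2 * K < e * real (Suc M)\<close> by (simp add: field_simps)
      finally show "dist (s m) (s n) < e" using sb[of m n] by (simp add: dist_norm)
    qed
  qed
  then obtain L where sL: "s \<longlonglongrightarrow> L" using Cauchy_convergent convergent_def by blast
  have qb: "norm (q w - L) \<le> K * cmod (w - z)" if "0 < cmod (w - z)" "cmod (w - z) \<le> 1" for w
  proof (rule tendsto_le[OF trivial_limit_sequentially])
    show "(\<lambda>n. norm (q w - s n)) \<longlonglongrightarrow> norm (q w - L)" by (intro tendsto_intros sL)
    show "(\<lambda>n. K * (cmod (w - z) + 1 / real (Suc n))) \<longlonglongrightarrow> K * cmod (w - z)"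
    proof -
      have l: "(\<lambda>n. 1 / real (Suc n)) \<longlonglongrightarrow> 0" using LIMSEQ_Suc[OF lim_1_over_n] by simp
      have "(\<lambda>n. K * (cmod (w - z) + 1 / real (Suc n))) \<longlonglongrightarrow> K * (cmod (w - z) + 0)"
        by (intro tendsto_mult_left tendsto_add tendsto_const l)
      then show ?thesis by simp
    qed
    show "\<forall>\<^sub>F n in sequentially. norm (q w - s n) \<le> K * (cmod (w - z) + 1 / real (Suc n))"
    proof (intro always_eventually allI)
      fix n
      have "norm (q w - s n) \<le> K * (cmod (w - z) + cmod ((z + of_real (1 / real (Suc n))) - z))"
        unfolding s_def by (rule H) (use that in \<open>simp_all only: d, simp_all\<close>)
      then show "norm (q w - s n) \<le> K * (cmod (w - z) + 1 / real (Suc n))" by (simp only: d)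
    qed
  qed
  have "((\<lambda>w. q w - L) \<longlongrightarrow> 0) (at z)"
  proof (rule Lim_null_comparison)
    show "\<forall>\<^sub>F w in at z. norm (q w - L) \<le> K * cmod (w - z)"
      unfolding eventually_at
      by (rule exI[of _ 1]) (auto intro!: qb simp: dist_norm)
    show "((\<lambda>w. K * cmod (w - z)) \<longlongrightarrow> 0) (at z)"
      by (rule tendsto_eq_intros | simp)+
  qed
  then show ?thesis using LIM_zero_iff by blast
qed

lemma deriv_bound3:
  assumes "entire F" "expb F c \<beta>" "0 \<le> \<beta>" "cmod (u - z) \<le> 1"
  shows "cmod ((deriv ^^ 3) (\<lambda>z. cinner (F z) v) u) \<le> 6 * c * exp (\<beta> * (cmod z + 2)) * norm v"
proof -
  have "cmod ((deriv ^^ 3) (\<lambda>z. cinner (F z) v) u) \<le> fact 3 * (c * exp (\<beta> * (cmod u + 1)) * norm v) / 1 ^ 3"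
    by (rule cauchy_scal[OF assms(1-3)]) simp
  also have "\<dots> \<le> 6 * c * exp (\<beta> * (cmod z + 2)) * norm v"
  proof -
    have "cmod u \<le> cmod z + 1" using cmod_le_add[OF assms(4)] .
    then have "exp (\<beta> * (cmod u + 1)) \<le> exp (\<beta> * (cmod z + 2))"
      using assms(3) by (simp add: mult_left_mono)
    then show ?thesis using expb_c_nonneg[OF assms(2)]
      by (simp add: fact_numeral mult.assoc mult_left_mono mult_right_mono)
  qed
  finally show ?thesis .
qed

lemma dq_estimate:
  assumes "entire F" "expb F c \<beta>" "0 \<le> \<beta>" "0 < cmod (w - z)" "cmod (w - z) \<le> 1"
  shows "cmod (cinner (scaleC (inverse (w - z)) (cder F w - cder F z)) v
              - (deriv ^^ 2) (\<lambda>z. cinner (F z) v) z)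
         \<le> (6 * c * exp (\<beta> * (cmod z + 2)) * norm v) * cmod (w - z)"
proof -
  define \<phi> where "\<phi> = (\<lambda>z. cinner (F z) v)"
  define M where "M = 6 * c * exp (\<beta> * (cmod z + 2)) * norm v"
  define d where "d = cmod (w - z)"
  have \<psi>: "(deriv ^^ 1) \<phi> = (\<lambda>u. cinner (cder F u) v)"
    unfolding \<phi>_def using scal_deriv_eq[OF assms(1)] by simp
  have \<psi>': "deriv \<phi> = (\<lambda>u. cinner (cder F u) v)"
    unfolding \<phi>_def using scal_deriv_eq[OF assms(1)] by simp
  have D2: "((deriv ^^ 1) \<phi> has_field_derivative (deriv ^^ 2) \<phi> u) (at u)" for u
    unfolding \<phi>_def using higher_has_deriv[OF assms(1), of 1 v u] by (simp add: numeral_2_eq_2)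
  have D3: "((deriv ^^ 2) \<phi> has_field_derivative (deriv ^^ 3) \<phi> u) (at u)" for u
    unfolding \<phi>_def using higher_has_deriv[OF assms(1), of 2 v u] by (simp add: numeral_3_eq_3)
  have zin: "z \<in> cball z d" and win: "w \<in> cball z d" by (auto simp: d_def dist_norm norm_minus_commute)
  have b2: "cmod ((deriv ^^ 2) \<phi> u - (deriv ^^ 2) \<phi> z) \<le> M * d" if "u \<in> cball z d" for u
  proof -
    have "cmod ((deriv ^^ 2) \<phi> u - (deriv ^^ 2) \<phi> z) \<le> M * cmod (u - z)"
    proof (rule field_differentiable_bound[of "cball z d"])
      show "convex (cball z d)" by simp
      show "((deriv ^^ 2) \<phi> has_field_derivative (deriv ^^ 3) \<phi> x) (at x within cball z d)" for x
        using D3 has_field_derivative_at_within by blast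
      show "cmod ((deriv ^^ 3) \<phi> x) \<le> M" if "x \<in> cball z d" for x
        unfolding \<phi>_def M_def
        by (rule deriv_bound3[OF assms(1-3)])
           (use that assms(5) in \<open>auto simp: d_def dist_norm norm_minus_commute\<close>)
    qed (use that zin in auto)
    also have "\<dots> \<le> M * d"
      using that by (intro mult_left_mono) (auto simp: M_def dist_norm norm_minus_commute
          intro!: mult_nonneg_nonneg expb_c_nonneg[OF assms(2)])
    finally show ?thesis .
  qed
  define g where "g u = (deriv ^^ 1) \<phi> u - u * (deriv ^^ 2) \<phi> z" for u
  have "cmod (g w - g z) \<le> (M * d) * cmod (w - z)"
  proof (rule field_differentiable_bound[of "cball z d"])
    show "convex (cball z d)" by simp
    show "(g has_field_derivative ((deriv ^^ 2) \<phi> x - (deriv ^^ 2) \<phi> z)) (at x within cball z d)" for x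
      unfolding g_def
      by (rule has_field_derivative_at_within) (use DERIV_diff[OF D2 DERIV_cmult_right[OF DERIV_ident]] in simp)
    show "cmod ((deriv ^^ 2) \<phi> x - (deriv ^^ 2) \<phi> z) \<le> M * d" if "x \<in> cball z d" for x
      using b2 that by blast
  qed (use zin win in auto)
  moreover have "g w - g z = (w - z) * (inverse (w - z) * (cinner (cder F w) v - cinner (cder F z) v)
                                        - (deriv ^^ 2) \<phi> z)"
    using assms(4) by (simp add: g_def \<psi> \<psi>' field_simps)
  ultimately have "d * cmod (inverse (w - z) * (cinner (cder F w) v - cinner (cder F z) v)
                             - (deriv ^^ 2) \<phi> z) \<le> (M * d) * d"
    by (simp add: norm_mult d_def)
  then have "cmod (inverse (w - z) * (cinner (cder F w) v - cinner (cder F z) v)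
                             - (deriv ^^ 2) \<phi> z) \<le> M * d"
    using assms(4) by (simp add: d_def mult.commute)
  then show ?thesis
    by (simp add: cinner_scaleC cinner_diff_left M_def d_def \<phi>_def)
qed

lemma cder_entire:
  assumes "entire F" "expb F c \<beta>" "0 \<le> \<beta>"
  shows "entire (cder F)"
  unfolding entire_def
proof
  fix z
  define K where "K = 6 * c * exp (\<beta> * (cmod z + 2))"
  have K0: "0 \<le> K" using expb_c_nonneg[OF assms(2)] by (simp add: K_def)
  define q where "q w = scaleC (inverse (w - z)) (cder F w - cder F z)" for w
  have "\<exists>L. (q \<longlongrightarrow> L) (at z)"
  proof (rule complete_limit[OF K0])
    fix w w' assume h: "0 < cmod (w - z)" "cmod (w - z) \<le> 1" "0 < cmod (w' - z)" "cmod (w' - z) \<le> 1"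
    define v where "v = q w - q w'"
    define D2 where "D2 = (deriv ^^ 2) (\<lambda>z. cinner (F z) v) z"
    have e1: "cmod (cinner (q w) v - D2) \<le> (K * norm v) * cmod (w - z)"
      unfolding q_def K_def D2_def using dq_estimate[OF assms h(1,2)] by simp
    have e2: "cmod (cinner (q w') v - D2) \<le> (K * norm v) * cmod (w' - z)"
      unfolding q_def K_def D2_def using dq_estimate[OF assms h(3,4)] by simp
    have "cinner v v = (cinner (q w) v - D2) - (cinner (q w') v - D2)"
      by (simp add: v_def cinner_diff_left)
    then have "cmod (cinner v v) \<le> cmod (cinner (q w) v - D2) + cmod (cinner (q w') v - D2)"
      using norm_triangle_ineq4[of "cinner (q w) v - D2" "cinner (q w') v - D2"] by simp
    then have "cmod (cinner v v) \<le> (K * norm v) * cmod (w - z) + (K * norm v) * cmod (w' - z)"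
      using e1 e2 by linarith
    then have "cmod (cinner v v) \<le> K * (cmod (w - z) + cmod (w' - z)) * norm v"
      by (simp add: algebra_simps)
    then show "norm (q w - q w') \<le> K * (cmod (w - z) + cmod (w' - z))"
      unfolding v_def by (rule norm_from_cinner_bound) (use K0 in simp)
  qed
  then show "\<exists>v. ((\<lambda>w. scaleC (inverse (w - z)) (cder F w - cder F z)) \<longlongrightarrow> v) (at z)"
    unfolding q_def .
qed

context
  fixes D :: "'a::complex_hilbert set" and A :: "'a \<Rightarrow> 'a"
  assumes nsa: "nonneg_selfadjoint D A"
begin

lemma nsa_sub: "subspace D" using nsa unfolding nonneg_selfadjoint_def by blast
lemma nsa_add: "x \<in> D \<Longrightarrow> y \<in> D \<Longrightarrow> A (x + y) = A x + A y" using nsa unfolding nonneg_selfadjoint_def by blast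
lemma nsa_scale: "x \<in> D \<Longrightarrow> A (r *\<^sub>R x) = r *\<^sub>R A x" using nsa unfolding nonneg_selfadjoint_def by blast
lemma nsa_adj: "{y. \<exists>z. \<forall>x\<in>D. inner (A x) y = inner x z} = D" using nsa unfolding nonneg_selfadjoint_def by blast
lemma nsa_sym: "x \<in> D \<Longrightarrow> y \<in> D \<Longrightarrow> inner (A x) y = inner x (A y)" using nsa unfolding nonneg_selfadjoint_def by blast
lemma nsa_pos: "x \<in> D \<Longrightarrow> inner (A x) x \<ge> 0" using nsa unfolding nonneg_selfadjoint_def by blast
lemma nsa_dense: "closure D = UNIV" using nsa unfolding nonneg_selfadjoint_def by blast

lemma D_0: "0 \<in> D" using nsa_sub by (rule subspace_0)
lemma D_add: "x \<in> D \<Longrightarrow> y \<in> D \<Longrightarrow> x + y \<in> D" using nsa_sub by (rule subspace_add)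
lemma D_scale: "x \<in> D \<Longrightarrow> r *\<^sub>R x \<in> D" using nsa_sub by (simp add: subspace_scale)
lemma D_diff: "x \<in> D \<Longrightarrow> y \<in> D \<Longrightarrow> x - y \<in> D" using nsa_sub by (rule subspace_diff)
lemma D_neg: "x \<in> D \<Longrightarrow> - x \<in> D" using nsa_sub by (rule subspace_neg)

lemma A_0: "A 0 = 0"
  using nsa_scale[OF D_0, of 0] by simp
lemma A_neg: "x \<in> D \<Longrightarrow> A (- x) = - A x"
  using nsa_scale[of x "-1"] by simp
lemma A_diff: "x \<in> D \<Longrightarrow> y \<in> D \<Longrightarrow> A (x - y) = A x - A y"
  using nsa_add[of x "-y"] A_neg[of y] D_neg[of y] by simp

lemma nsa_closed:
  assumes F: "F \<noteq> bot" and ev: "eventually (\<lambda>s. x s \<in> D) F"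
    and xa: "(x \<longlongrightarrow> a) F" and Axb: "((\<lambda>s. A (x s)) \<longlongrightarrow> b) F"
  shows "a \<in> D \<and> A a = b"
proof -
  have adj: "inner (A z) a = inner z b" if "z \<in> D" for z
  proof -
    have l1: "((\<lambda>s. inner (A z) (x s)) \<longlongrightarrow> inner (A z) a) F" by (intro tendsto_intros xa)
    have l2: "((\<lambda>s. inner z (A (x s))) \<longlongrightarrow> inner z b) F" by (intro tendsto_intros Axb)
    have ev': "eventually (\<lambda>s. inner z (A (x s)) = inner (A z) (x s)) F"
      using ev by eventually_elim (use nsa_sym that in simp)
    from l2 ev' have "((\<lambda>s. inner (A z) (x s)) \<longlongrightarrow> inner z b) F"
      by (rule Lim_transform_eventually)
    then show ?thesis using l1 tendsto_unique[OF F] by blast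
  qed
  then have aD: "a \<in> D" using nsa_adj by blast
  have "D \<subseteq> {u. inner (A a - b) u = 0}"
  proof
    fix u assume uD: "u \<in> D"
    have h1: "inner (A u) a = inner u b" using adj[OF uD] .
    have h2: "inner (A u) a = inner u (A a)" using nsa_sym[OF uD aD] .
    have "inner (A a - b) u = inner u (A a) - inner u b" by (metis inner_commute inner_diff_left)
    then show "u \<in> {u. inner (A a - b) u = 0}" using h1 h2 by simp
  qed
  then have "closure D \<subseteq> {u. inner (A a - b) u = 0}"
    by (rule closure_minimal) (rule closed_hyperplane)
  then have "inner (A a - b) (A a - b) = 0" using nsa_dense by blast
  then show ?thesis using aD by simp
qed

lemma ws_integrable:
  fixes x :: "real \<Rightarrow> 'a"
  assumes "continuous_on {0..} x" "0 \<le> t"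
  shows "x integrable_on {0..t}"
proof -
  have "continuous_on {0..t} x" using assms(1) by (rule continuous_on_subset) auto
  then show ?thesis by (rule integrable_continuous_interval)
qed

lemma ws_unique:
  assumes w1: "weak_solution D A x1" and w2: "weak_solution D A x2" and eq0: "x1 0 = x2 0" and T: "0 \<le> T"
  shows "x1 T = x2 T"
proof -
  define z where "z t = x1 t - x2 t" for t
  define u where "u t = integral {0..t} z" for t
  have c1: "continuous_on {0..} x1" and c2: "continuous_on {0..} x2"
    using w1 w2 unfolding weak_solution_def by blast+
  have cz: "continuous_on {0..} z" unfolding z_def by (intro continuous_intros c1 c2)
  have uD: "u t \<in> D" and zu: "z t = - A (u t)" if "0 \<le> t" for t
  proof -
    have "u t = integral {0..t} x1 - integral {0..t} x2"
      unfolding u_def z_def by (rule integral_diff[OF ws_integrable[OF c1 that] ws_integrable[OF c2 that]])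
    moreover have i1: "integral {0..t} x1 \<in> D" "x1 t = - A (integral {0..t} x1) + x1 0"
      using w1 that unfolding weak_solution_def by blast+
    moreover have i2: "integral {0..t} x2 \<in> D" "x2 t = - A (integral {0..t} x2) + x2 0"
      using w2 that unfolding weak_solution_def by blast+
    ultimately show "u t \<in> D" "z t = - A (u t)"
      using D_diff A_diff eq0 by (auto simp: z_def)
  qed
  define e where "e t = inner (u t) (u t)" for t
  have cT: "continuous_on {0..T} z" by (rule continuous_on_subset[OF cz]) auto
  have du: "(u has_vector_derivative z s) (at s within {0..T})" if "s \<in> {0..T}" for s
    unfolding u_def by (rule integral_has_vector_derivative[OF cT that])
  have de: "(e has_vector_derivative (2 * inner (z s) (u s))) (at s within {0..T})" if "s \<in> {0..T}" for s
  proof -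
    have "(e has_derivative (\<lambda>h. inner (u s) (h *\<^sub>R z s) + inner (h *\<^sub>R z s) (u s))) (at s within {0..T})"
      unfolding e_def using du[OF that] unfolding has_vector_derivative_def
      by (rule has_derivative_inner) (use du[OF that] in \<open>simp add: has_vector_derivative_def\<close>)
    then show ?thesis unfolding has_vector_derivative_def
      by (rule has_derivative_eq_rhs) (auto simp: inner_commute algebra_simps)
  qed
  have "((\<lambda>s. 2 * inner (z s) (u s)) has_integral e T - e 0) {0..T}"
    by (rule fundamental_theorem_of_calculus[OF T de])
  moreover have "((\<lambda>s. 0::real) has_integral 0) {0..T}" by (rule has_integral_0)
  moreover have "2 * inner (z s) (u s) \<le> 0" if "s \<in> {0..T}" for s
    using zu[of s] nsa_pos[OF uD[of s]] that by simp
  ultimately have "e T - e 0 \<le> 0" by (rule has_integral_le) auto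
  moreover have "e 0 = 0" by (simp add: e_def u_def)
  ultimately have "inner (u T) (u T) \<le> 0" by (simp add: e_def)
  then have "inner (u T) (u T) = 0" using inner_ge_zero[of "u T"] by linarith
  then have "u T = 0" by simp
  then have "z T = 0" using zu[OF T] A_0 by simp
  then show ?thesis by (simp add: z_def)
qed

lemma semigroup_eq:
  assumes "weak_solution D A x" "0 \<le> s"
  shows "semigroup D A s (x 0) = x s"
  unfolding semigroup_def
proof (rule the_equality)
  show "\<exists>x'. weak_solution D A x' \<and> x' 0 = x 0 \<and> x' s = x s" using assms by blast
  fix v assume "\<exists>x'. weak_solution D A x' \<and> x' 0 = x 0 \<and> x' s = v"
  then obtain x' where "weak_solution D A x'" "x' 0 = x 0" "x' s = v" by blast
  then show "v = x s" using ws_unique[OF _ assms(1) _ assms(2)] by blast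
qed

end

definition Yd :: "(complex \<Rightarrow> 'a::complex_hilbert) \<Rightarrow> nat \<Rightarrow> complex \<Rightarrow> 'a" where
  "Yd Y n = (cder ^^ n) Y"

lemma Yd_0[simp]: "Yd Y 0 = Y" by (simp add: Yd_def)
lemma Yd_Suc: "Yd Y (Suc n) = cder (Yd Y n)" by (simp add: Yd_def)

lemma Yd_props:
  assumes "entire Y" "expb Y c \<beta>" "0 \<le> \<beta>"
  shows "entire (Yd Y n) \<and> expb (Yd Y n) (c * exp \<beta> ^ n) \<beta>"
proof (induction n)
  case 0 then show ?case using assms by simp
next
  case (Suc n)
  then have "entire (cder (Yd Y n))" "expb (cder (Yd Y n)) (c * exp \<beta> ^ n * exp \<beta>) \<beta>"
    using cder_entire cder_bound assms(3) by blast+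
  moreover have "c * exp \<beta> ^ n * exp \<beta> = c * exp \<beta> ^ Suc n" by (simp add: algebra_simps)
  ultimately show ?case by (simp add: Yd_Suc)
qed

lemma real_dq:
  assumes "entire F"
  shows "((\<lambda>s. inverse (s - t) *\<^sub>R (F (of_real s) - F (of_real t))) \<longlongrightarrow> cder F (of_real t)) (at t within S)"
proof -
  have lim: "((\<lambda>w. scaleC (inverse (w - of_real t)) (F w - F (of_real t))) \<longlongrightarrow> cder F (of_real t)) (at (of_real t))"
    by (rule cder_tendsto[OF assms])
  have fl: "filterlim (\<lambda>s. complex_of_real s) (at (of_real t)) (at t within S)"
    unfolding filterlim_at
  proof
    show "\<forall>\<^sub>F s in at t within S. complex_of_real s \<in> UNIV \<and> complex_of_real s \<noteq> of_real t"
      unfolding eventually_at_filter by simp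
    show "((\<lambda>s. complex_of_real s) \<longlongrightarrow> of_real t) (at t within S)"
      by (intro tendsto_intros)
  qed
  have "((\<lambda>s. scaleC (inverse (of_real s - of_real t)) (F (of_real s) - F (of_real t))) \<longlongrightarrow> cder F (of_real t)) (at t within S)"
    using filterlim_compose[OF lim fl] by (simp add: o_def)
  moreover have "scaleC (inverse (of_real s - of_real t)) (F (of_real s) - F (of_real t))
              = inverse (s - t) *\<^sub>R (F (of_real s) - F (of_real t))" for s
    by (simp add: scaleC_of_real flip: of_real_diff of_real_inverse)
  ultimately show ?thesis by simp
qed

lemma real_vder:
  assumes "entire F"
  shows "((\<lambda>s. F (of_real s)) has_vector_derivative cder F (of_real t)) (at t within S)"
  unfolding vder_iff_dq by (rule real_dq[OF assms])

lemma real_cont: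
  assumes "entire F"
  shows "continuous_on S (\<lambda>s. F (of_real s))"
proof (rule continuous_at_imp_continuous_on, rule ballI)
  fix x show "isCont (\<lambda>s. F (of_real s)) x"
    by (rule has_vector_derivative_continuous[OF real_vder[OF assms]])
qed

context
  fixes D :: "'a::complex_hilbert set" and A :: "'a \<Rightarrow> 'a" and y :: "real \<Rightarrow> 'a" and Y :: "complex \<Rightarrow> 'a"
  assumes nsa: "nonneg_selfadjoint D A"
    and ws: "weak_solution D A y"
    and ent: "\<And>n. entire (Yd Y n)"
    and yY: "\<And>t. 0 \<le> t \<Longrightarrow> Y (of_real t) = y t"
begin

lemma Yd_in_D:
  "0 \<le> t \<Longrightarrow> Yd Y n (of_real t) \<in> D \<and> A (Yd Y n (of_real t)) = - Yd Y (Suc n) (of_real t)"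
proof (induction n arbitrary: t)
  case 0
  define I where "I s = integral {0..s} y" for s
  have wsI: "I s \<in> D" "y s = - A (I s) + y 0" if "0 \<le> s" for s
    using ws that unfolding weak_solution_def I_def by blast+
  have cy: "continuous_on {0..t+1} y"
    by (rule continuous_on_subset[of "{0..}"]) (use ws[unfolded weak_solution_def] in auto)
  have dI: "(I has_vector_derivative y t) (at t within {0..t+1})"
    unfolding I_def by (rule integral_has_vector_derivative[OF cy]) (use 0 in auto)
  have l1: "((\<lambda>s. inverse (s - t) *\<^sub>R (I s - I t)) \<longlongrightarrow> y t) (at t within {t..t+1})"
    using dI unfolding vder_iff_dq by (rule tendsto_within_subset) (use 0 in auto)
  then have l1': "((\<lambda>s. inverse (s - t) *\<^sub>R (I s - I t)) \<longlongrightarrow> y t) (at_right t)"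
    by (simp add: at_within_Icc_at_right)
  have l2: "((\<lambda>s. - (inverse (s - t) *\<^sub>R (Y (of_real s) - Y (of_real t)))) \<longlongrightarrow> - cder Y (of_real t)) (at_right t)"
    by (intro tendsto_minus real_dq) (use ent[of 0] in simp)
  have ev: "\<forall>\<^sub>F s in at_right t. t < s" by (simp add: eventually_at_right_less)
  have "\<forall>\<^sub>F s in at_right t. - (inverse (s - t) *\<^sub>R (Y (of_real s) - Y (of_real t)))
                          = A (inverse (s - t) *\<^sub>R (I s - I t))"
    using ev
  proof eventually_elim
    case (elim s)
    then have "0 \<le> s" using 0 by simp
    have As: "A (I s) = y 0 - y s" by (subst wsI(2)[OF \<open>0 \<le> s\<close>]) simp
    have At: "A (I t) = y 0 - y t" by (subst wsI(2)[OF 0]) simp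
    have "A (inverse (s - t) *\<^sub>R (I s - I t)) = inverse (s - t) *\<^sub>R (A (I s) - A (I t))"
      using nsa_scale[OF nsa] A_diff[OF nsa] D_diff[OF nsa] wsI \<open>0 \<le> s\<close> 0 by simp
    also have "\<dots> = inverse (s - t) *\<^sub>R (y t - y s)" unfolding As At by simp
    also have "\<dots> = - (inverse (s - t) *\<^sub>R (y s - y t))" by (simp add: scaleR_diff_right)
    finally show ?case using yY \<open>0 \<le> s\<close> 0 by simp
  qed
  then have l3: "((\<lambda>s. A (inverse (s - t) *\<^sub>R (I s - I t))) \<longlongrightarrow> - cder Y (of_real t)) (at_right t)"
    using l2 by (rule Lim_transform_eventually[rotated])
  have ev2: "\<forall>\<^sub>F s in at_right t. inverse (s - t) *\<^sub>R (I s - I t) \<in> D"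
    using ev by eventually_elim (use wsI 0 D_diff[OF nsa] D_scale[OF nsa] in simp)
  have "y t \<in> D \<and> A (y t) = - cder Y (of_real t)"
    by (rule nsa_closed[OF nsa trivial_limit_at_right_real ev2 l1' l3])
  then show ?case using yY[OF 0] by (simp add: Yd_Suc)
next
  case (Suc n)
  define x where "x s = inverse (s - t) *\<^sub>R (Yd Y n (of_real s) - Yd Y n (of_real t))" for s
  have ev: "\<forall>\<^sub>F s in at_right t. t < s" by (simp add: eventually_at_right_less)
  have ev2: "\<forall>\<^sub>F s in at_right t. x s \<in> D"
    using ev by eventually_elim (use Suc D_diff[OF nsa] D_scale[OF nsa] in \<open>simp add: x_def\<close>)
  have l1: "(x \<longlongrightarrow> Yd Y (Suc n) (of_real t)) (at_right t)"
    unfolding x_def Yd_Suc by (rule real_dq[OF ent])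
  have l2: "((\<lambda>s. - (inverse (s - t) *\<^sub>R (Yd Y (Suc n) (of_real s) - Yd Y (Suc n) (of_real t))))
            \<longlongrightarrow> - Yd Y (Suc (Suc n)) (of_real t)) (at_right t)"
    unfolding Yd_Suc[of Y "Suc n"] by (intro tendsto_minus real_dq ent)
  have "\<forall>\<^sub>F s in at_right t. - (inverse (s - t) *\<^sub>R (Yd Y (Suc n) (of_real s) - Yd Y (Suc n) (of_real t)))
                          = A (x s)"
    using ev
  proof eventually_elim
    case (elim s)
    then have "0 \<le> s" using Suc by simp
    have Is: "Yd Y n (of_real s) \<in> D" "A (Yd Y n (of_real s)) = - Yd Y (Suc n) (of_real s)"
      using Suc.IH[OF \<open>0 \<le> s\<close>] by auto
    have It: "Yd Y n (of_real t) \<in> D" "A (Yd Y n (of_real t)) = - Yd Y (Suc n) (of_real t)"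
      using Suc.IH[OF Suc.prems] by auto
    have "A (x s) = inverse (s - t) *\<^sub>R (A (Yd Y n (of_real s)) - A (Yd Y n (of_real t)))"
      unfolding x_def nsa_scale[OF nsa D_diff[OF nsa Is(1) It(1)]] A_diff[OF nsa Is(1) It(1)] ..
    also have "\<dots> = - (inverse (s - t) *\<^sub>R (Yd Y (Suc n) (of_real s) - Yd Y (Suc n) (of_real t)))"
      unfolding Is(2) It(2) by (simp add: scaleR_diff_right)
    finally show ?case by simp
  qed
  then have l3: "((\<lambda>s. A (x s)) \<longlongrightarrow> - Yd Y (Suc (Suc n)) (of_real t)) (at_right t)"
    using l2 by (rule Lim_transform_eventually[rotated])
  show ?case by (rule nsa_closed[OF nsa trivial_limit_at_right_real ev2 l1 l3])
qed

end

lemma diff_identity: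
  fixes G :: "real \<Rightarrow> 'a::real_vector"
  shows "(\<Sum>j\<le>Suc k. ((-1) ^ (Suc k - j) * real (Suc k choose j)) *\<^sub>R G (s + real j * h))
       = (\<Sum>j\<le>k. ((-1) ^ (k - j) * real (k choose j)) *\<^sub>R G (s + h + real j * h))
       - (\<Sum>j\<le>k. ((-1) ^ (k - j) * real (k choose j)) *\<^sub>R G (s + real j * h))"
proof -
  define g where "g j = G (s + real j * h)" for j
  have gs: "G (s + h + real j * h) = g (Suc j)" for j by (simp add: g_def algebra_simps)
  have A: "(\<Sum>j\<le>Suc k. ((-1) ^ (Suc k - j) * real (Suc k choose j)) *\<^sub>R g j)
      = (-1) ^ Suc k *\<^sub>R g 0 + (\<Sum>j\<le>k. ((-1) ^ (k - j) * real (Suc k choose Suc j)) *\<^sub>R g (Suc j))"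
    by (subst sum.atMost_Suc_shift) simp
  have B: "(\<Sum>j\<le>k. ((-1) ^ (k - j) * real (Suc k choose Suc j)) *\<^sub>R g (Suc j))
      = (\<Sum>j\<le>k. ((-1) ^ (k - j) * real (k choose j)) *\<^sub>R g (Suc j))
      + (\<Sum>j\<le>k. ((-1) ^ (k - j) * real (k choose Suc j)) *\<^sub>R g (Suc j))"
    by (simp add: distrib_left scaleR_add_left sum.distrib)
  have C: "(\<Sum>j\<le>k. ((-1) ^ (k - j) * real (k choose Suc j)) *\<^sub>R g (Suc j))
      = - (\<Sum>j\<in>{1..k}. ((-1) ^ (k - j) * real (k choose j)) *\<^sub>R g j)"
  proof -
    have "(\<Sum>j\<le>k. ((-1) ^ (k - j) * real (k choose Suc j)) *\<^sub>R g (Suc j))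
        = (\<Sum>j<k. ((-1) ^ (k - j) * real (k choose Suc j)) *\<^sub>R g (Suc j))"
      by (simp add: lessThan_Suc_atMost[symmetric])
    also have "\<dots> = (\<Sum>j<k. - (((-1) ^ (k - Suc j) * real (k choose Suc j)) *\<^sub>R g (Suc j)))"
    proof (rule sum.cong[OF refl])
      fix j assume "j \<in> {..<k}"
      then have e: "k - j = Suc (k - Suc j)" by auto
      show "((-1) ^ (k - j) * real (k choose Suc j)) *\<^sub>R g (Suc j) = - (((-1) ^ (k - Suc j) * real (k choose Suc j)) *\<^sub>R g (Suc j))"
        by (simp only: e) simp
    qed
    also have "\<dots> = - (\<Sum>j\<in>{1..k}. ((-1) ^ (k - j) * real (k choose j)) *\<^sub>R g j)"
      by (simp add: sum_negf sum.atLeast1_atMost_eq)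
    finally show ?thesis .
  qed
  have E: "(\<Sum>j\<le>k. ((-1) ^ (k - j) * real (k choose j)) *\<^sub>R g j)
        = (-1) ^ k *\<^sub>R g 0 + (\<Sum>j\<in>{1..k}. ((-1) ^ (k - j) * real (k choose j)) *\<^sub>R g j)"
  proof -
    have "{..k} = insert 0 {1..k}" by auto
    then show ?thesis by simp
  qed
  show ?thesis unfolding gs g_def[symmetric] A B C E by simp
qed



lemma stirling_step:
  assumes M: "1 \<le> M"
  shows "exp 1 * real M ^ (M+1) \<le> real (M+1) ^ (M+1)"
proof -
  have pos: "0 < real M" using M by simp
  have "ln (real M / real (M+1)) \<le> real M / real (M+1) - 1" by (rule ln_le_minus_one) (use pos in simp)
  also have "\<dots> = - 1 / real (M+1)" by (simp add: field_simps)
  finally have "ln (real M) - ln (real (M+1)) \<le> - 1 / real (M+1)" using pos by (simp add: ln_div)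
  then have "1 \<le> real (M+1) * (ln (real (M+1)) - ln (real M))" by (simp add: field_simps)
  then have "exp 1 \<le> exp (real (M+1) * (ln (real (M+1)) - ln (real M)))" by simp
  also have "\<dots> = (real (M+1) / real M) ^ (M+1)"
    using pos by (simp only: exp_of_nat_mult exp_diff) (simp add: exp_ln)
  also have "\<dots> = real (M+1) ^ (M+1) / real M ^ (M+1)" by (simp add: power_divide)
  finally show ?thesis using pos by (simp add: pos_le_divide_eq)
qed

lemma stirling:
  assumes "1 \<le> M"
  shows "fact M * exp (real M) \<le> exp 1 * real M * real M ^ M"
  using assms
proof (induction M rule: nat_induct_at_least)
  case base then show ?case by simp
next
  case (Suc M)
  have "fact (Suc M) * exp (real (Suc M)) = real (Suc M) * (fact M * exp (real M)) * exp 1"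
    by (simp add: exp_add algebra_simps)
  also have "\<dots> \<le> real (Suc M) * (exp 1 * real M * real M ^ M) * exp 1"
    using Suc.IH by (intro mult_right_mono mult_left_mono) auto
  also have "\<dots> = exp 1 * real (Suc M) * (exp 1 * real M ^ (M+1))" by (simp add: algebra_simps)
  also have "\<dots> \<le> exp 1 * real (Suc M) * real (M+1) ^ (M+1)"
    using stirling_step[OF Suc.hyps] by (intro mult_left_mono) auto
  finally show ?case by simp
qed

lemma at_within_Ici_nonbot:
  assumes "0 \<le> (t::real)"
  shows "at t within {0..} \<noteq> bot"
proof
  assume "at t within {0..} = bot"
  moreover have "at_right t \<le> at t within {0..}"
    by (rule at_le) (use assms in auto)
  ultimately have "at_right t = bot" by (simp add: bot_unique)
  then show False using trivial_limit_at_right_real by blast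
qed

context
  fixes D :: "'a::complex_hilbert set" and A :: "'a \<Rightarrow> 'a" and y :: "real \<Rightarrow> 'a" and Y :: "complex \<Rightarrow> 'a"
    and c \<beta> :: real
  assumes nsa: "nonneg_selfadjoint D A"
    and ws: "weak_solution D A y"
    and entY: "entire Y"
    and yY: "\<And>t. 0 \<le> t \<Longrightarrow> Y (of_real t) = y t"
    and expY: "expb Y c \<beta>"
    and bpos: "0 < \<beta>"
begin

lemma ent: "entire (Yd Y n)" using Yd_props[OF entY expY] bpos by auto

lemma inD: "0 \<le> t \<Longrightarrow> Yd Y n (of_real t) \<in> D"
  using Yd_in_D[OF nsa ws ent yY] by blast
lemma AYd: "0 \<le> t \<Longrightarrow> A (Yd Y n (of_real t)) = - Yd Y (Suc n) (of_real t)"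
  using Yd_in_D[OF nsa ws ent yY] by blast

lemma higher_eq: "(deriv ^^ n) (\<lambda>z. cinner (Y z) v) = (\<lambda>z. cinner (Yd Y n z) v)"
proof (induction n)
  case 0 then show ?case by simp
next
  case (Suc n)
  have "(deriv ^^ Suc n) (\<lambda>z. cinner (Y z) v) = deriv ((deriv ^^ n) (\<lambda>z. cinner (Y z) v))" by simp
  also have "\<dots> = (\<lambda>z. cinner (Yd Y (Suc n) z) v)"
    unfolding Suc.IH Yd_Suc by (rule scal_deriv_eq[OF ent])
  finally show ?case .
qed

lemma cauchy_Yd:
  assumes M: "1 \<le> M" and t: "0 \<le> t"
  shows "norm (Yd Y M (of_real t)) \<le> c * exp (\<beta> * t) * exp 1 * real M * \<beta> ^ M"
proof -
  define v where "v = Yd Y M (of_real t)"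
  define r where "r = real M / \<beta>"
  have r: "0 < r" using M bpos by (simp add: r_def)
  have c0: "0 \<le> c" by (rule expb_c_nonneg[OF expY])
  have "cmod ((deriv ^^ M) (\<lambda>z. cinner (Y z) v) (of_real t)) \<le> fact M * (c * exp (\<beta> * (cmod (complex_of_real t) + r)) * norm v) / r ^ M"
    by (rule cauchy_scal[OF entY expY]) (use bpos r in auto)
  then have "cmod (cinner v v) \<le> (fact M * c * exp (\<beta> * (t + r)) / r ^ M) * norm v"
    using t by (simp add: higher_eq v_def)
  then have nv: "norm v \<le> fact M * c * exp (\<beta> * (t + r)) / r ^ M"
    by (rule norm_from_cinner_bound) (use c0 r in simp)
  have br: "\<beta> * (t + r) = \<beta> * t + real M" using bpos by (simp add: r_def field_simps)
  have rM: "r ^ M = real M ^ M / \<beta> ^ M" by (simp add: r_def power_divide)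
  have Mpos: "0 < real M ^ M" using M by simp
  have "fact M * c * exp (\<beta> * (t + r)) / r ^ M = c * exp (\<beta> * t) * \<beta> ^ M * ((fact M * exp (real M)) / real M ^ M)"
    unfolding br rM using bpos Mpos by (simp add: exp_add field_simps)
  also have "\<dots> \<le> c * exp (\<beta> * t) * \<beta> ^ M * ((exp 1 * real M * real M ^ M) / real M ^ M)"
    using stirling[OF M] c0 bpos Mpos by (intro mult_left_mono divide_right_mono) auto
  also have "\<dots> = c * exp (\<beta> * t) * exp 1 * real M * \<beta> ^ M" using Mpos by (simp add: field_simps)
  finally show ?thesis using nv by (simp add: v_def)
qed

lemma energy_decr: "0 \<le> t \<Longrightarrow> norm (y t) \<le> norm (y 0)"
proof -
  assume t: "0 \<le> t"
  define e where "e s = inner (Y (of_real s)) (Y (of_real s))" for s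
  have dY: "((\<lambda>s. Y (of_real s)) has_vector_derivative Yd Y 1 (of_real s)) (at s within {0..t})" for s
    using real_vder[OF entY] by (simp add: Yd_Suc)
  have de: "(e has_vector_derivative (2 * inner (Yd Y 1 (of_real s)) (Y (of_real s)))) (at s within {0..t})" for s
  proof -
    have "(e has_derivative (\<lambda>h. inner (Y (of_real s)) (h *\<^sub>R Yd Y 1 (of_real s)) + inner (h *\<^sub>R Yd Y 1 (of_real s)) (Y (of_real s)))) (at s within {0..t})"
      unfolding e_def using dY[of s] unfolding has_vector_derivative_def
      by (rule has_derivative_inner) (use dY[of s] in \<open>simp add: has_vector_derivative_def\<close>)
    then show ?thesis unfolding has_vector_derivative_def
      by (rule has_derivative_eq_rhs) (auto simp: inner_commute algebra_simps)
  qed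
  have "((\<lambda>s. 2 * inner (Yd Y 1 (of_real s)) (Y (of_real s))) has_integral e t - e 0) {0..t}"
    by (rule fundamental_theorem_of_calculus[OF t]) (use de in blast)
  moreover have "((\<lambda>s. 0::real) has_integral 0) {0..t}" by (rule has_integral_0)
  moreover have "2 * inner (Yd Y 1 (of_real s)) (Y (of_real s)) \<le> 0" if "s \<in> {0..t}" for s
  proof -
    have "0 \<le> s" using that by simp
    have "Yd Y 1 (of_real s) = - A (Yd Y 0 (of_real s))" using AYd[OF \<open>0 \<le> s\<close>, of 0] by simp
    then show ?thesis using nsa_pos[OF nsa inD[OF \<open>0 \<le> s\<close>, of 0]] by simp
  qed
  ultimately have "e t - e 0 \<le> 0" by (rule has_integral_le) auto
  then have "(norm (y t))^2 \<le> (norm (y 0))^2"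
    using yY[OF t] yY[of 0] by (simp add: e_def power2_norm_eq_inner)
  then show ?thesis by (simp add: power2_le_iff_abs_le)
qed

lemma y_le_S: "0 \<le> t \<Longrightarrow> norm (y t) \<le> S_norm y"
  unfolding S_norm_def
  by (rule cSUP_upper) (auto intro!: bdd_aboveI2 energy_decr)

lemma S_nonneg: "0 \<le> S_norm y"
  using y_le_S[of 0] norm_ge_zero[of "y 0"] by linarith

lemma key_bound:
  assumes t: "0 \<le> t"
  shows "norm (Yd Y (Suc n) (of_real t)) \<le> \<beta> * norm (Yd Y n (of_real t))"
proof (rule ccontr)
  assume "\<not> ?thesis"
  then have gt: "\<beta> * norm (Yd Y n (of_real t)) < norm (Yd Y (Suc n) (of_real t))" by simp
  define a where "a j = Yd Y (n + j) (of_real t)" for j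
  have aD: "a j \<in> D" for j unfolding a_def by (rule inD[OF t])
  have aS: "a (Suc j) = - A (a j)" for j unfolding a_def using AYd[OF t, of "n + j"] by simp
  have ish: "inner (a i) (a j) = inner (a 0) (a (i + j))" for i j
  proof (induction i arbitrary: j)
    case 0 then show ?case by simp
  next
    case (Suc i)
    have "inner (a (Suc i)) (a j) = - inner (A (a i)) (a j)" by (simp add: aS)
    also have "\<dots> = - inner (a i) (A (a j))" using nsa_sym[OF nsa aD aD] by simp
    also have "\<dots> = inner (a i) (a (Suc j))" by (simp add: aS)
    also have "\<dots> = inner (a 0) (a (Suc i + j))" using Suc.IH[of "Suc j"] by simp
    finally show ?case .
  qed
  have sq: "norm (a N) ^ 2 \<le> norm (a 0) * norm (a (2 * N))" for N
  proof -
    have "norm (a N) ^ 2 = inner (a N) (a N)" by (simp add: power2_norm_eq_inner)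
    also have "\<dots> = inner (a 0) (a (2 * N))" using ish[of N N] by (simp add: mult_2)
    also have "\<dots> \<le> norm (a 0) * norm (a (2 * N))" by (rule norm_cauchy_schwarz)
    finally show ?thesis .
  qed
  define n0 where "n0 = norm (a 0)"
  have dbl: "norm (a 1) ^ (2 ^ m) \<le> norm (a (2 ^ m)) * n0 ^ (2 ^ m - 1)" for m
  proof (induction m)
    case 0 then show ?case by simp
  next
    case (Suc m)
    define p :: nat where "p = 2 ^ m"
    have p1: "1 \<le> p" by (simp add: p_def)
    have "norm (a 1) ^ (2 ^ Suc m) = (norm (a 1) ^ p) ^ 2" by (simp add: p_def power_mult[symmetric] mult.commute)
    also have "\<dots> \<le> (norm (a p) * n0 ^ (p - 1)) ^ 2"
      using Suc.IH unfolding p_def by (intro power_mono) auto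
    also have "\<dots> = norm (a p) ^ 2 * n0 ^ (2 * p - 2)"
    proof -
      have "(p - 1) * 2 = 2 * p - 2" by simp
      then have "(n0 ^ (p - 1)) ^ 2 = n0 ^ (2 * p - 2)" by (metis power_mult)
      then show ?thesis by (simp add: power_mult_distrib)
    qed
    also have "\<dots> \<le> (n0 * norm (a (2 * p))) * n0 ^ (2 * p - 2)"
      using sq[of p] by (intro mult_right_mono) (auto simp: n0_def)
    also have "\<dots> = norm (a (2 * p)) * n0 ^ (2 * p - 1)"
    proof -
      have "2 * p - 1 = Suc (2 * p - 2)" using p1 by simp
      then show ?thesis by (simp add: algebra_simps)
    qed
    finally show ?case by (simp add: p_def)
  qed
  have n0pos: "0 < n0"
  proof (rule ccontr)
    assume "\<not> 0 < n0"
    then have "a 0 = 0" by (simp add: n0_def)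
    then have "a 1 = 0" using aS[of 0] nsa A_0 by simp
    moreover have "0 \<le> \<beta> * norm (Yd Y n (of_real t))" using bpos by simp
    ultimately show False using gt by (simp add: a_def)
  qed
  define K where "K = c * exp (\<beta> * t) * exp 1"
  have K0: "0 \<le> K" using expb_c_nonneg[OF expY] by (simp add: K_def)
  define \<rho> where "\<rho> = norm (a 1) / (\<beta> * n0)"
  have a1: "norm (a 1) = \<rho> * \<beta> * n0" using bpos n0pos by (simp add: \<rho>_def)
  have rho1: "1 < \<rho>" using gt bpos n0pos by (simp add: \<rho>_def a_def n0_def field_simps)
  have bnd: "\<rho> ^ N * n0 \<le> K * real (n + N) * \<beta> ^ n" if "N = 2 ^ m" for N m
  proof -
    have N1: "1 \<le> N" using that by simp
    have "(\<rho> * \<beta> * n0) ^ N \<le> norm (a N) * n0 ^ (N - 1)" using dbl[of m] that a1 by simp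
    also have "\<dots> \<le> (K * real (n + N) * \<beta> ^ (n + N)) * n0 ^ (N - 1)"
    proof (rule mult_right_mono)
      show "norm (a N) \<le> K * real (n + N) * \<beta> ^ (n + N)"
        unfolding a_def K_def using cauchy_Yd[of "n + N" t] N1 t by simp
    qed (use n0pos in simp)
    finally have "\<rho> ^ N * (\<beta> ^ N * n0 ^ N) \<le> (K * real (n + N) * \<beta> ^ n) * (\<beta> ^ N * n0 ^ (N - 1))"
      by (simp add: power_mult_distrib power_add algebra_simps)
    moreover have "n0 ^ N = n0 * n0 ^ (N - 1)" using N1 by (simp add: power_eq_if)
    ultimately have "(\<rho> ^ N * n0) * (\<beta> ^ N * n0 ^ (N - 1)) \<le> (K * real (n + N) * \<beta> ^ n) * (\<beta> ^ N * n0 ^ (N - 1))"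
      by (simp add: algebra_simps)
    moreover have "0 < \<beta> ^ N * n0 ^ (N - 1)" using bpos n0pos by simp
    ultimately show ?thesis by (rule mult_right_le_imp_le)
  qed
  define \<sigma> where "\<sigma> = sqrt \<rho>"
  have s1: "1 < \<sigma>" using rho1 by (simp add: \<sigma>_def)
  have rs: "\<rho> = \<sigma> ^ 2" using rho1 by (simp add: \<sigma>_def)
  define \<delta> where "\<delta> = (\<sigma> - 1) ^ 2 * n0"
  have d0: "0 < \<delta>" using s1 n0pos by (simp add: \<delta>_def)
  define L where "L = K * \<beta> ^ n"
  have L0: "0 \<le> L" using K0 bpos by (simp add: L_def)
  obtain m where m: "max (real n + 1) (2 * L / \<delta> + 1) < 2 ^ m"
  proof -
    have "\<exists>m. max (real n + 1) (2 * L / \<delta> + 1) < (2::real) ^ m" by (rule real_arch_pow) simp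
    then show ?thesis using that by blast
  qed
  define N :: nat where "N = 2 ^ m"
  have Nr: "real N = 2 ^ m" by (simp add: N_def)
  have m1: "real n + 1 < 2 ^ m" and m2: "2 * L / \<delta> + 1 < 2 ^ m"
    using m by (simp_all only: max_less_iff_conj)
  have Nn: "real n < real N" unfolding Nr using m1 by linarith
  have "2 * L / \<delta> < 2 ^ m" using m2 by linarith
  then have "2 * L < 2 ^ m * \<delta>" using d0 by (simp only: pos_divide_less_eq)
  then have NL: "2 * L < \<delta> * real N" unfolding Nr by (simp add: mult.commute)
  have "real N * (\<sigma> - 1) \<le> \<sigma> ^ N"
    using Bernoulli_inequality[of "\<sigma> - 1" N] s1 by simp
  then have "(real N * (\<sigma> - 1)) ^ 2 \<le> (\<sigma> ^ N) ^ 2" using s1 by (intro power_mono) auto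
  then have "real N ^ 2 * (\<sigma> - 1) ^ 2 \<le> \<rho> ^ N"
    by (simp add: rs power_mult_distrib power_mult[symmetric] mult.commute)
  then have "real N ^ 2 * \<delta> \<le> \<rho> ^ N * n0"
    using n0pos by (simp add: \<delta>_def mult.assoc[symmetric] mult_right_mono)
  also have "\<dots> \<le> K * real (n + N) * \<beta> ^ n" using bnd[of N m] by (simp add: N_def)
  also have "\<dots> = L * (real n + real N)" by (simp add: L_def)
  also have "\<dots> \<le> L * (2 * real N)" using Nn L0 by (intro mult_left_mono) auto
  also have "\<dots> < real N ^ 2 * \<delta>"
  proof -
    have "0 < real N" by (simp add: N_def)
    then have "real N * (2 * L) < real N * (\<delta> * real N)" using NL by simp
    then show ?thesis by (simp add: power2_eq_square algebra_simps)
  qed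
  finally show False by simp
qed

lemma base_bound: "0 \<le> t \<Longrightarrow> norm (Yd Y n (of_real t)) \<le> \<beta> ^ n * norm (y t)"
proof (induction n)
  case 0 then show ?case using yY by simp
next
  case (Suc n)
  have "norm (Yd Y (Suc n) (of_real t)) \<le> \<beta> * norm (Yd Y n (of_real t))" by (rule key_bound[OF Suc.prems])
  also have "\<dots> \<le> \<beta> * (\<beta> ^ n * norm (y t))" using Suc bpos by (intro mult_left_mono) auto
  finally show ?case by simp
qed

lemma shift_vder:
  assumes "(f has_vector_derivative 1) (at s within S)"
  shows "((\<lambda>s. Yd Y n (of_real (f s))) has_vector_derivative Yd Y (Suc n) (of_real (f s))) (at s within S)"
proof -
  have "((\<lambda>u. Yd Y n (of_real u)) has_vector_derivative cder (Yd Y n) (of_real (f s))) (at (f s) within f ` S)"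
    by (rule real_vder[OF ent])
  from vector_diff_chain_within[OF assms this] show ?thesis by (simp add: o_def Yd_Suc)
qed

definition E :: "real \<Rightarrow> nat \<Rightarrow> nat \<Rightarrow> real \<Rightarrow> 'a" where
  "E h k n s = (\<Sum>j\<le>k. ((-1) ^ (k - j) * real (k choose j)) *\<^sub>R Yd Y n (of_real (s + real j * h)))"

lemma E_vder: "((\<lambda>s. E h k n s) has_vector_derivative E h k (Suc n) s) (at s within S)"
  unfolding E_def
proof (intro has_vector_derivative_sum)
  fix j
  have "((\<lambda>s. Yd Y n (of_real (s + real j * h))) has_vector_derivative Yd Y (Suc n) (of_real (s + real j * h))) (at s within S)"
    by (rule shift_vder) (auto intro!: derivative_eq_intros)
  then show "((\<lambda>s. ((-1) ^ (k - j) * real (k choose j)) *\<^sub>R Yd Y n (of_real (s + real j * h))) has_vector_derivative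
         ((-1) ^ (k - j) * real (k choose j)) *\<^sub>R Yd Y (Suc n) (of_real (s + real j * h))) (at s within S)"
    by (rule bounded_linear.has_vector_derivative[OF bounded_linear_scaleR_right])
qed

lemma E_Suc: "E h (Suc k) n s = E h k n (s + h) - E h k n s"
  unfolding E_def by (rule diff_identity)

lemma E_bound:
  assumes h: "0 < h"
  shows "0 \<le> t \<Longrightarrow> norm (E h k n t) \<le> (\<beta> * h) ^ k * \<beta> ^ n * S_norm y"
proof (induction k arbitrary: n t)
  case 0
  have "norm (E h 0 n t) = norm (Yd Y n (of_real t))" by (simp add: E_def)
  also have "\<dots> \<le> \<beta> ^ n * norm (y t)" by (rule base_bound[OF 0])
  also have "\<dots> \<le> \<beta> ^ n * S_norm y" using y_le_S[OF 0] bpos by (intro mult_left_mono) auto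
  finally show ?case by simp
next
  case (Suc k)
  define B where "B = (\<beta> * h) ^ k * \<beta> ^ Suc n * S_norm y"
  have "norm (E h k n (t + h) - E h k n t) \<le> B * norm ((t + h) - t)"
  proof (rule differentiable_bound[of "{t..t+h}"])
    show "convex {t..t+h}" by simp
    show "(E h k n has_derivative (\<lambda>x. x *\<^sub>R E h k (Suc n) s)) (at s within {t..t+h})" for s
      using E_vder[of h k n s "{t..t+h}"] unfolding has_vector_derivative_def by simp
    show "onorm (\<lambda>x. x *\<^sub>R E h k (Suc n) s) \<le> B" if "s \<in> {t..t+h}" for s
    proof -
      have "onorm (\<lambda>x. x *\<^sub>R E h k (Suc n) s) = norm (E h k (Suc n) s)"
        using onorm_scaleR_left[of "\<lambda>x::real. x" "E h k (Suc n) s"] by (simp add: onorm_id bounded_linear_ident)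
      also have "\<dots> \<le> B" unfolding B_def by (rule Suc.IH) (use that Suc.prems h in auto)
      finally show ?thesis .
    qed
  qed (use h in auto)
  then have "norm (E h (Suc k) n t) \<le> B * h" using h by (simp add: E_Suc)
  then show ?case by (simp add: B_def algebra_simps)
qed

lemma nth_deriv_eq: "0 \<le> t \<Longrightarrow> nth_deriv y n t = Yd Y n (of_real t)"
proof (induction n arbitrary: t)
  case 0 then show ?case using yY by simp
next
  case (Suc n)
  have "((\<lambda>s. Yd Y n (of_real s)) has_vector_derivative Yd Y (Suc n) (of_real t)) (at t within {0..})"
    using real_vder[OF ent] by (simp add: Yd_Suc)
  then have "(nth_deriv y n has_vector_derivative Yd Y (Suc n) (of_real t)) (at t within {0..})"
    by (rule has_vector_derivative_transform[rotated 2]) (use Suc in auto)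
  then show ?case by (simp add: vector_derivative_within[OF at_within_Ici_nonbot[OF Suc.prems]])
qed

lemma shift_ws:
  assumes t: "0 \<le> t"
  shows "weak_solution D A (\<lambda>s. Yd Y n (of_real (t + s)))"
  unfolding weak_solution_def
proof (rule conjI)
  have dv: "((\<lambda>s. Yd Y m (of_real (t + s))) has_vector_derivative Yd Y (Suc m) (of_real (t + s))) (at s within S)" for m s S
    by (rule shift_vder) (auto intro!: derivative_eq_intros)
  show "continuous_on {0..} (\<lambda>s. Yd Y n (of_real (t + s)))"
  proof (rule continuous_at_imp_continuous_on, rule ballI)
    fix x show "isCont (\<lambda>s. Yd Y n (of_real (t + s))) x"
      by (rule has_vector_derivative_continuous[OF dv])
  qed
  show "\<forall>r\<ge>0. integral {0..r} (\<lambda>s. Yd Y n (of_real (t + s))) \<in> D \<and>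
        Yd Y n (of_real (t + r)) = - A (integral {0..r} (\<lambda>s. Yd Y n (of_real (t + s)))) + Yd Y n (of_real (t + 0))"
  proof (intro allI impI)
  fix r :: real assume r: "0 \<le> r"
  show "integral {0..r} (\<lambda>s. Yd Y n (of_real (t + s))) \<in> D \<and>
        Yd Y n (of_real (t + r)) = - A (integral {0..r} (\<lambda>s. Yd Y n (of_real (t + s)))) + Yd Y n (of_real (t + 0))"
  proof (cases n)
    case 0
    define I where "I s = integral {0..s} y" for s
    have wsI: "I s \<in> D" "A (I s) = y 0 - y s" if "0 \<le> s" for s
    proof -
      show "I s \<in> D" using ws that unfolding weak_solution_def I_def by blast
      have "y s = - A (I s) + y 0" using ws that unfolding weak_solution_def I_def by blast
      then show "A (I s) = y 0 - y s" by (simp add: algebra_simps)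
    qed
    have cy: "continuous_on {0..t+r} y"
      by (rule continuous_on_subset[of "{0..}"]) (use ws[unfolded weak_solution_def] in auto)
    have "integral {0..r} (\<lambda>s. Y (of_real (t + s))) = integral {0..r} (\<lambda>s. y (s + t))"
    proof (rule integral_cong)
      fix x assume "x \<in> {0..r}"
      then have "0 \<le> t + x" using t by simp
      then show "Y (of_real (t + x)) = y (x + t)" using yY[of "t + x"] by (simp only: add.commute[of x t])
    qed
    also have "\<dots> = integral {t..t+r} y"
      using integral_shift_real_ivl[of t t "t + r" y] by simp
    also have "\<dots> = I (t + r) - I t"
      using Henstock_Kurzweil_Integration.integral_combine[where a=0 and c=t and b="t+r" and f=y] integrable_continuous_interval[OF cy] t r
      by (simp add: I_def algebra_simps)
    finally have eq: "integral {0..r} (\<lambda>s. Y (of_real (t + s))) = I (t + r) - I t" .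
    show ?thesis unfolding 0 Yd_0 eq
      using wsI[of "t + r"] wsI[OF t] t r D_diff[OF nsa] A_diff[OF nsa] yY[of "t + r"] yY[OF t]
      by simp
  next
    case (Suc m)
    have "((\<lambda>s. Yd Y (Suc m) (of_real (t + s))) has_integral Yd Y m (of_real (t + r)) - Yd Y m (of_real (t + 0))) {0..r}"
      by (rule fundamental_theorem_of_calculus[OF r]) (rule dv)
    then have eq: "integral {0..r} (\<lambda>s. Yd Y (Suc m) (of_real (t + s))) = Yd Y m (of_real (t + r)) - Yd Y m (of_real t)"
      by (simp add: integral_unique)
    have tr: "0 \<le> t + r" using t r by simp
    show ?thesis unfolding Suc eq
      using inD[OF tr, of m] inD[OF t, of m] AYd[OF tr, of m] AYd[OF t, of m] A_diff[OF nsa] D_diff[OF nsa] by simp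
  qed
qed
qed

lemma Delta_eq:
  assumes h: "0 < h" and t: "0 \<le> t"
  shows "Delta D A h k (nth_deriv y n) t = E h k n t"
  unfolding Delta_def E_def
proof (rule sum.cong[OF refl])
  fix j assume "j \<in> {..k}"
  have jh: "0 \<le> real j * h" using h by simp
  have "semigroup D A (real j * h) (nth_deriv y n t) = Yd Y n (of_real (t + real j * h))"
    using semigroup_eq[OF nsa shift_ws[OF t, of n] jh] nth_deriv_eq[OF t] by simp
  then show "((-1) ^ (k - j) * real (k choose j)) *\<^sub>R semigroup D A (real j * h) (nth_deriv y n t) =
             ((-1) ^ (k - j) * real (k choose j)) *\<^sub>R Yd Y n (of_real (t + real j * h))" by simp
qed

lemma main_beta:
  assumes h: "0 < h"
  shows "S_norm (Delta D A h k (nth_deriv y n)) \<le> (\<beta> * h) ^ k * \<beta> ^ n * S_norm y"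
  unfolding S_norm_def[of "Delta D A h k (nth_deriv y n)"]
proof (rule cSUP_least)
  show "{0::real..} \<noteq> {}" by auto
  fix t :: real assume "t \<in> {0..}"
  then have t: "0 \<le> t" by simp
  show "norm (Delta D A h k (nth_deriv y n) t) \<le> (\<beta> * h) ^ k * \<beta> ^ n * S_norm y"
    unfolding Delta_eq[OF h t] by (rule E_bound[OF h t])
qed

end

theorem lemma1:
  fixes D :: "'a::complex_hilbert set" and A :: "'a \<Rightarrow> 'a"
    and y :: "real \<Rightarrow> 'a" and Y :: "complex \<Rightarrow> 'a" and \<alpha> h :: real and k n :: nat
  assumes "nonneg_selfadjoint D A"
    and "y \<in> S0 D A"
    and "entire_ext_exp_type Y y"
    and "\<alpha> = exp_type Y"
    and "h > 0"
  shows "S_norm (Delta D A h k (nth_deriv y n)) \<le> (\<alpha> * h) ^ k * \<alpha> ^ n * S_norm y"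
proof -
  have ws: "weak_solution D A y" using assms(2) unfolding S0_def by blast
  have entY: "entire Y" and yY: "\<And>t. 0 \<le> t \<Longrightarrow> Y (of_real t) = y t" and ne: "exp_type_set Y \<noteq> {}"
    using assms(3) unfolding entire_ext_exp_type_def by auto
  have pos: "\<And>b. b \<in> exp_type_set Y \<Longrightarrow> 0 < b" unfolding exp_type_set_def by auto
  have a0: "0 \<le> \<alpha>" unfolding assms(4) exp_type_def
    by (rule cInf_greatest[OF ne]) (use pos in force)
  have mem: "b \<in> exp_type_set Y" if ab: "\<alpha> < b" for b
  proof -
    obtain b' where b': "b' \<in> exp_type_set Y" "b' < b"
      using cInf_lessD[OF ne, of b] ab assms(4) unfolding exp_type_def by auto
    then obtain c where c: "\<forall>z. norm (Y z) \<le> c * exp (b' * cmod z)" unfolding exp_type_set_def by auto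
    have "norm (Y 0) \<le> c" using c[rule_format, of 0] by simp
    then have c0: "0 \<le> c" using norm_ge_zero[of "Y 0"] by linarith
    have "norm (Y z) \<le> c * exp (b * cmod z)" for z
    proof -
      have "exp (b' * cmod z) \<le> exp (b * cmod z)" using b'(2) by (simp add: mult_right_mono)
      then have "c * exp (b' * cmod z) \<le> c * exp (b * cmod z)" using c0 by (rule mult_left_mono)
      then show ?thesis using c[rule_format, of z] by linarith
    qed
    moreover have "0 < b" using ab a0 by simp
    ultimately show ?thesis unfolding exp_type_set_def by auto
  qed
  define L where "L = S_norm (Delta D A h k (nth_deriv y n))"
  have bnd: "L \<le> (b * h) ^ k * b ^ n * S_norm y" if "\<alpha> < b" for b
  proof -
    from mem[OF that] obtain c where ec: "expb Y c b" and b0: "0 < b" unfolding exp_type_set_def expb_def by auto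
    show ?thesis unfolding L_def using main_beta[OF assms(1) ws entY yY ec b0 assms(5)] .
  qed
  have "((\<lambda>b. (b * h) ^ k * b ^ n * S_norm y) \<longlongrightarrow> (\<alpha> * h) ^ k * \<alpha> ^ n * S_norm y) (at_right \<alpha>)"
    by (intro tendsto_intros)
  moreover have "((\<lambda>b. L) \<longlongrightarrow> L) (at_right \<alpha>)" by simp
  moreover have "\<forall>\<^sub>F b in at_right \<alpha>. L \<le> (b * h) ^ k * b ^ n * S_norm y"
    using eventually_at_right_less[of \<alpha>] by eventually_elim (rule bnd)
  ultimately have "L \<le> (\<alpha> * h) ^ k * \<alpha> ^ n * S_norm y"
    by (rule tendsto_le[OF trivial_limit_at_right_real])
  then show ?thesis unfolding L_def .
qed

end
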